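(* Let $(\mathcal{A},\mathbf{m})$ be a multiarrangement in $\mathbb{Q}^l$ with $\mathcal{A}=\{H_1,\dots,H_n\}$, $H_i=\alpha_i^{-1}(0)$, where the $\alpha_i\in S_\mathbb{Z}=\mathbb{Z}[x_1,\dots,x_l]$ are linear forms such that no prime number divides any $\alpha_i$. Let $p$ be a good prime for $(\mathcal{A},\mathbf{m})$ and assume that the map $\pi_p^l\colon\operatorname{Ker}(\varphi_\mathbb{Z})\to D(\mathcal{A}_p,\mathbf{m})$ is surjective. If $(\mathcal{A}_p,\mathbf{m})$ is free in $\mathbb{F}_p^l$ with exponents $(e_1,\dots,e_l)$, then $(\mathcal{A},\mathbf{m})$ is free in $\mathbb{Q}^l$ with exponents $(e_1,\dots,e_l)$.
   Context: For a field $\mathbb{K}$ and $R=\mathbb{K}[x_1,\dots,x_l]$, a multiarrangement $(\mathcal{B},\mathbf{m})$ in $\mathbb{K}^l$ consists of distinct linear hyperplanes $\beta_i^{-1}(0)$ with multiplicities $\mathbf{m}\ge0$; $D(\mathcal{B},\mathbf{m})=\{\delta=\sum_j f_j\partial_{x_j}: f_j\in R,\ \delta(\beta_i)\in\beta_i^{\mathbf{m}_i}R\ \forall i\}$, identified with a submodule of $R^l$ via $\delta\mapsto(f_1,\dots,f_l)^t$. It is free with exponents $(e_1,\dots,e_l)$ if $D(\mathcal{B},\mathbf{m})$ is a free $R$-module with a basis of homogeneous derivations of polynomial degrees $e_1,\dots,e_l$. Let $S_p=\mathbb{F}_p[x_1,\dots,x_l]$, $\pi_p\colon S_\mathbb{Z}\to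 S_p$ reduction mod $p$, and $\pi_p^k\colon S_\mathbb{Z}^k\to S_p^k$ its componentwise extension. A prime $p$ is good if $\pi_p(\alpha_i)\ne\pi_p(\alpha_j)$ for all $i\ne j$; then $(\mathcal{A}_p,\mathbf{m})$ is the multiarrangement in $\mathbb{F}_p^l$ with hyperplanes $\pi_p(\alpha_i)^{-1}(0)$ of multiplicity $\mathbf{m}(H_i)$. Let $M(\mathcal{A},\mathbf{m})\subseteq S_\mathbb{Z}^n$ be generated by $\alpha_i^{\mathbf{m}(H_i)}e_i$, $A(\mathcal{A})=(\partial\alpha_i/\partial x_j)_{i,j}$, and $\varphi_\mathbb{Z}\colon S_\mathbb{Z}^l\to S_\mathbb{Z}^n/M(\mathcal{A},\mathbf{m})$, $g\mapsto A(\mathcal{A})g$. For good $p$, $\pi_p^l$ maps $\operatorname{Ker}(\varphi_\mathbb{Z})$ into $D(\mathcal{A}_p,\mathbf{m})\subseteq S_p^l$. *)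

theory Defs
  imports "HOL-Library.Poly_Mapping" "Berlekamp_Zassenhaus.Finite_Field"
begin

text \<open>Polynomial ring K[x_j : j in 'n] with variables indexed by a finite type 'n
  (so l = CARD('n)); monomials are exponent vectors 'n =>0 nat.\<close>

type_synonym ('n, 'k) mpoly = "('n \<Rightarrow>\<^sub>0 nat) \<Rightarrow>\<^sub>0 'k"

definition mp_var :: "'n \<Rightarrow> ('n, 'k::comm_ring_1) mpoly" where
  "mp_var j = Poly_Mapping.single (Poly_Mapping.single j 1) 1"

definition mp_const :: "'k::comm_ring_1 \<Rightarrow> ('n, 'k) mpoly" where
  "mp_const c = Poly_Mapping.single 0 c"

definition lin_form :: "('n::finite \<Rightarrow> 'k::comm_ring_1) \<Rightarrow> ('n, 'k) mpoly" where
  "lin_form c = (\<Sum>j\<in>UNIV. mp_const (c j) * mp_var j)"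

definition mp_pderiv :: "'n \<Rightarrow> ('n, 'k::comm_ring_1) mpoly \<Rightarrow> ('n, 'k) mpoly" where
  "mp_pderiv j p = (\<Sum>\<mu>\<in>Poly_Mapping.keys p.
      Poly_Mapping.single (\<mu> - Poly_Mapping.single j 1) (of_nat (Poly_Mapping.lookup \<mu> j) * Poly_Mapping.lookup p \<mu>))"

text \<open>A derivation delta = sum_j f_j d/dx_j, identified with (f_j)_j, applied to a polynomial.\<close>
definition apply_deriv :: "('n::finite \<Rightarrow> ('n, 'k::comm_ring_1) mpoly) \<Rightarrow> ('n, 'k) mpoly \<Rightarrow> ('n, 'k) mpoly" where
  "apply_deriv f q = (\<Sum>j\<in>UNIV. f j * mp_pderiv j q)"

text \<open>D(B,m) for the multiarrangement with defining linear forms beta_i (i < n), given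
  by coefficient vectors b i, and multiplicities m i.\<close>
definition deriv_module ::
  "nat \<Rightarrow> (nat \<Rightarrow> 'n::finite \<Rightarrow> 'k::comm_ring_1) \<Rightarrow> (nat \<Rightarrow> nat) \<Rightarrow> ('n \<Rightarrow> ('n, 'k) mpoly) set" where
  "deriv_module n b m = {f. \<forall>i<n. lin_form (b i) ^ m i dvd apply_deriv f (lin_form (b i))}"

definition mono_deg :: "('n::finite \<Rightarrow>\<^sub>0 nat) \<Rightarrow> nat" where
  "mono_deg \<mu> = (\<Sum>j\<in>UNIV. Poly_Mapping.lookup \<mu> j)"

definition homogeneous_of_deg :: "nat \<Rightarrow> ('n::finite, 'k::zero) mpoly \<Rightarrow> bool" where
  "homogeneous_of_deg d p \<longleftrightarrow> (\<forall>\<mu>\<in>Poly_Mapping.keys p. mono_deg \<mu> = d)"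

definition homog_deriv :: "nat \<Rightarrow> ('n::finite \<Rightarrow> ('n, 'k::zero) mpoly) \<Rightarrow> bool" where
  "homog_deriv d f \<longleftrightarrow> (\<forall>j. homogeneous_of_deg d (f j))"

definition free_with_exponents ::
  "nat \<Rightarrow> (nat \<Rightarrow> 'n::finite \<Rightarrow> 'k::comm_ring_1) \<Rightarrow> (nat \<Rightarrow> nat) \<Rightarrow> ('n \<Rightarrow> nat) \<Rightarrow> bool" where
  "free_with_exponents n b m e \<longleftrightarrow>
     (\<exists>\<theta> :: 'n \<Rightarrow> 'n \<Rightarrow> ('n, 'k) mpoly.
        (\<forall>k. \<theta> k \<in> deriv_module n b m \<and> homog_deriv (e k) (\<theta> k)) \<and>
        (\<forall>\<delta>\<in>deriv_module n b m. \<exists>!g :: 'n \<Rightarrow> ('n, 'k) mpoly.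
              \<delta> = (\<lambda>j. \<Sum>k\<in>UNIV. g k * \<theta> k j)))"

text \<open>Ker(phi_Z): g in S_Z^l with A(A) g in M(A,m), where M is generated by
  alpha_i^(m_i) e_i and A(A) = (d alpha_i / d x_j).\<close>
definition ker_phi_Z :: "nat \<Rightarrow> (nat \<Rightarrow> 'n::finite \<Rightarrow> int) \<Rightarrow> (nat \<Rightarrow> nat) \<Rightarrow> ('n \<Rightarrow> ('n, int) mpoly) set" where
  "ker_phi_Z n a m = {g. \<exists>h :: nat \<Rightarrow> ('n, int) mpoly. \<forall>i<n.
      (\<Sum>j\<in>UNIV. mp_pderiv j (lin_form (a i)) * g j) = h i * lin_form (a i) ^ m i}"

text \<open>Reduction mod p, p = CARD('p).\<close>
definition red_p :: "('n, int) mpoly \<Rightarrow> ('n, 'p::prime_card mod_ring) mpoly" where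
  "red_p q = Poly_Mapping.map of_int q"

definition red_p_vec :: "('n \<Rightarrow> ('n, int) mpoly) \<Rightarrow> ('n \<Rightarrow> ('n, 'p::prime_card mod_ring) mpoly)" where
  "red_p_vec g = (\<lambda>j. red_p (g j))"

definition good_prime :: "'p::prime_card itself \<Rightarrow> nat \<Rightarrow> (nat \<Rightarrow> 'n::finite \<Rightarrow> int) \<Rightarrow> bool" where
  "good_prime _ n a \<longleftrightarrow> (\<forall>i<n. \<forall>j<n. i \<noteq> j \<longrightarrow>
      (red_p (lin_form (a i)) :: ('n, 'p mod_ring) mpoly) \<noteq> red_p (lin_form (a j)))"

end

theory Submission
  imports Defs
begin


abbreviation lk where "lk \<equiv> Poly_Mapping.lookup"
abbreviation sng where "sng \<equiv> Poly_Mapping.single"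
abbreviation ks where "ks \<equiv> Poly_Mapping.keys"

lemma pm_expand: "(p :: 'a \<Rightarrow>\<^sub>0 'b::comm_monoid_add) = (\<Sum>\<mu>\<in>ks p. sng \<mu> (lk p \<mu>))"
proof (rule poly_mapping_eqI)
  fix \<nu>
  have "lk (\<Sum>\<mu>\<in>ks p. sng \<mu> (lk p \<mu>)) \<nu> = (\<Sum>\<mu>\<in>ks p. (lk p \<mu> when \<mu> = \<nu>))"
    by (simp add: lookup_sum lookup_single)
  also have "\<dots> = lk p \<nu>"
    by (cases "\<nu> \<in> ks p") (auto simp: when_def in_keys_iff)
  finally show "lk p \<nu> = lk (\<Sum>\<mu>\<in>ks p. sng \<mu> (lk p \<mu>)) \<nu>" by simp
qed

lemma lookup_map0: "f 0 = 0 \<Longrightarrow> lk (Poly_Mapping.map f p) \<mu> = f (lk p \<mu>)"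
  by (simp add: Poly_Mapping.map.rep_eq when_def)

lemma map_add_hom: "(\<And>x y. f (x + y) = f x + f y) \<Longrightarrow> f 0 = 0 \<Longrightarrow>
   Poly_Mapping.map f (p + q) = Poly_Mapping.map f p + Poly_Mapping.map f q"
  by (rule poly_mapping_eqI) (simp add: lookup_map0 lookup_add)

definition imap :: "('a \<Rightarrow>\<^sub>0 int) \<Rightarrow> ('a \<Rightarrow>\<^sub>0 'k::comm_ring_1)" where
  "imap p = Poly_Mapping.map of_int p"

lemma lookup_imap[simp]: "lk (imap p) \<mu> = of_int (lk p \<mu>)"
  by (simp add: imap_def lookup_map0)

lemma imap_add[simp]: "imap (p + q) = imap p + imap q"
  by (rule poly_mapping_eqI) (simp add: lookup_add)

lemma imap_diff[simp]: "imap (p - q) = imap p - imap q"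
  by (rule poly_mapping_eqI) (simp add: lookup_minus)

lemma imap_zero[simp]: "imap 0 = 0"
  by (rule poly_mapping_eqI) simp

lemma imap_sum: "imap (sum f A) = (\<Sum>x\<in>A. imap (f x))"
  by (induction A rule: infinite_finite_induct) auto

lemma imap_single[simp]: "imap (sng \<mu> c) = sng \<mu> (of_int c)"
  by (rule poly_mapping_eqI) (simp add: lookup_single when_def)

lemma imap_expand: "imap p = (\<Sum>\<mu>\<in>ks p. sng \<mu> (of_int (lk p \<mu>)))"
  by (subst pm_expand[of p]) (simp add: imap_sum)

lemma imap_mult[simp]: "(imap ((p :: ('a::monoid_add \<Rightarrow>\<^sub>0 int)) * q) :: 'a \<Rightarrow>\<^sub>0 'k::comm_ring_1) = imap p * imap q"
proof -
  have "imap (p * q) = imap ((\<Sum>\<mu>\<in>ks p. sng \<mu> (lk p \<mu>)) * (\<Sum>\<nu>\<in>ks q. sng \<nu> (lk q \<nu>)))"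
    using pm_expand[of p] pm_expand[of q] by simp
  also have "\<dots> = (\<Sum>\<mu>\<in>ks p. \<Sum>\<nu>\<in>ks q. sng (\<mu>+\<nu>) (of_int (lk p \<mu> * lk q \<nu>)))"
    by (simp add: sum_distrib_left sum_distrib_right imap_sum mult_single) (rule sum.swap)
  also have "\<dots> = (\<Sum>\<mu>\<in>ks p. sng \<mu> (of_int (lk p \<mu>))) * (\<Sum>\<nu>\<in>ks q. sng \<nu> (of_int (lk q \<nu>)))"
    by (simp add: sum_distrib_left sum_distrib_right mult_single sum.swap[of _ "ks q"])
  also have "\<dots> = imap p * imap q"
    by (simp only: imap_expand[of p] imap_expand[of q])
  finally show ?thesis .
qed

lemma imap_one[simp]: "imap (1 :: ('a::monoid_add \<Rightarrow>\<^sub>0 int)) = 1"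
  by (rule poly_mapping_eqI) (simp add: lookup_one when_def)

lemma imap_power[simp]: "imap ((p :: ('a::monoid_add \<Rightarrow>\<^sub>0 int)) ^ k) = imap p ^ k"
  by (induction k) auto

lemma imap_const[simp]: "imap (mp_const c) = mp_const (of_int c)"
  by (simp add: mp_const_def)

lemma keys_imap: "ks (imap p) \<subseteq> ks p"
  by (auto simp: in_keys_iff)

lemma mp_const_mult: "mp_const (a * b) = mp_const a * mp_const b"
  by (simp add: mp_const_def mult_single)

lemma mp_const_add: "mp_const (a + b) = mp_const a + mp_const b"
  by (simp add: mp_const_def single_add)

lemma mp_const_diff: "mp_const (a - b) = (mp_const a - mp_const b :: ('n,'k::comm_ring_1) mpoly)"
  by (simp add: mp_const_def single_diff)

lemma mp_const_one: "mp_const 1 = 1"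
  by (simp add: mp_const_def)

lemma mp_const_zero[simp]: "mp_const 0 = 0"
  by (simp add: mp_const_def)

lemma lookup_const_mult: "lk (mp_const c * f) \<mu> = c * lk f \<mu>"
  by (simp add: mp_const_def mult_map_scale_conv_mult[symmetric] lookup_map0)

lemma mp_const_power: "mp_const (c ^ k) = mp_const c ^ k"
  by (induction k) (auto simp: mp_const_mult mp_const_one)


lemma lin_form_alt: "lin_form c = (\<Sum>j\<in>UNIV. sng (sng j 1) (c j))"
  unfolding lin_form_def mp_const_def mp_var_def by (simp add: mult_single)

lemma lookup_single_1: "lk (sng (j::'n) (1::nat)) i = (if i = j then 1 else 0)"
  by (simp add: lookup_single when_def)

lemma single_1_inj: "inj (\<lambda>j::'n. sng j (1::nat))"
  by (rule injI) (metis lookup_single_eq lookup_single_not_eq zero_neq_one)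

lemma single_1_eq[simp]: "sng (x::'n) (Suc 0) = sng y (Suc 0) \<longleftrightarrow> x = y"
  using single_1_inj[THEN injD, of x y] by auto

lemma pderiv_superset:
  assumes "finite K" "ks p \<subseteq> K"
  shows "mp_pderiv j p = (\<Sum>\<mu>\<in>K. sng (\<mu> - sng j 1) (of_nat (lk \<mu> j) * lk p \<mu>))"
  unfolding mp_pderiv_def
  by (rule sum.mono_neutral_left) (use assms in \<open>auto simp: in_keys_iff\<close>)

lemma pderiv_lin_form: "mp_pderiv j (lin_form (c :: 'n::finite \<Rightarrow> 'k::comm_ring_1)) = mp_const (c j)"
proof -
  have sub: "ks (lin_form c) \<subseteq> range (\<lambda>i. sng i 1)"
  proof
    fix \<mu> assume "\<mu> \<in> ks (lin_form c)"
    then have "lk (lin_form c) \<mu> \<noteq> 0" by (simp add: in_keys_iff)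
    then have "(\<Sum>i\<in>UNIV. (c i when sng i 1 = \<mu>)) \<noteq> 0"
      by (simp add: lin_form_alt lookup_sum lookup_single)
    then obtain i where "(c i when sng i 1 = \<mu>) \<noteq> 0" by (meson sum.neutral)
    then show "\<mu> \<in> range (\<lambda>i. sng i 1)" by (auto simp: when_def split: if_splits)
  qed
  have "mp_pderiv j (lin_form c) = (\<Sum>\<mu>\<in>range (\<lambda>i. sng i (1::nat)). sng (\<mu> - sng j 1) (of_nat (lk \<mu> j) * lk (lin_form c) \<mu>))"
    by (rule pderiv_superset) (use sub in auto)
  also have "\<dots> = (\<Sum>i\<in>UNIV. sng (sng i 1 - sng j 1) (of_nat (lk (sng i (1::nat)) j) * lk (lin_form c) (sng i 1)))"
    by (subst sum.reindex) (use single_1_inj in auto)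
  also have "\<dots> = (\<Sum>i\<in>UNIV. if i = j then mp_const (c j) else 0)"
  proof (rule sum.cong)
    fix i assume "i \<in> (UNIV::'n set)"
    have lkc: "lk (lin_form c) (sng i 1) = c i"
    proof -
      have "lk (lin_form c) (sng i 1) = (\<Sum>i'\<in>UNIV. (c i' when sng i' (1::nat) = sng i 1))"
        by (simp add: lin_form_alt lookup_sum lookup_single)
      also have "\<dots> = (\<Sum>i'\<in>UNIV. if i' = i then c i else 0)"
        by (rule sum.cong) (auto simp: when_def)
      finally show ?thesis by simp
    qed
    show "sng (sng i 1 - sng j 1) (of_nat (lk (sng i (1::nat)) j) * lk (lin_form c) (sng i 1)) =
          (if i = j then mp_const (c j) else 0)"
      using lkc by (auto simp: lookup_single when_def mp_const_def)
  qed simp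
  also have "\<dots> = mp_const (c j)" by simp
  finally show ?thesis .
qed

definition ev :: "('n::finite \<Rightarrow> 'k::comm_ring_1) \<Rightarrow> ('n \<Rightarrow> ('n, 'k) mpoly) \<Rightarrow> ('n, 'k) mpoly" where
  "ev c f = (\<Sum>j\<in>UNIV. mp_const (c j) * f j)"

lemma apply_deriv_lin: "apply_deriv f (lin_form c) = ev c f"
  unfolding apply_deriv_def ev_def by (simp add: pderiv_lin_form mult.commute)

lemma deriv_module_alt: "deriv_module n b m = {f. \<forall>i<n. lin_form (b i) ^ m i dvd ev (b i) f}"
  unfolding deriv_module_def by (simp add: apply_deriv_lin)

lemma ker_alt: "ker_phi_Z n a m = {g. \<forall>i<n. lin_form (a i) ^ m i dvd ev (a i) g}"
proof -
  have e1: "(\<exists>h. \<forall>i<n. ev (a i) g = h i * lin_form (a i) ^ m i) \<longleftrightarrow> (\<forall>i<n. lin_form (a i) ^ m i dvd ev (a i) g)" for g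
  proof
    assume "\<forall>i<n. lin_form (a i) ^ m i dvd ev (a i) g"
    then have "\<forall>i. \<exists>h. i < n \<longrightarrow> ev (a i) g = h * lin_form (a i) ^ m i"
      by (metis dvd_def mult.commute)
    then show "\<exists>h. \<forall>i<n. ev (a i) g = h i * lin_form (a i) ^ m i" by metis
  qed auto
  have e2: "(\<Sum>j\<in>UNIV. mp_pderiv j (lin_form (a i)) * g j) = ev (a i) g" for i g
    by (simp add: ev_def pderiv_lin_form mult.commute)
  show ?thesis unfolding ker_phi_Z_def by (simp only: e1 e2)
qed

lemma lin_form_imap: "imap (lin_form c) = lin_form (\<lambda>k. of_int (c k))"
  by (simp add: lin_form_alt imap_sum)

lemma ev_imap: "imap (ev c f) = ev (\<lambda>k. of_int (c k)) (\<lambda>j. imap (f j))"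
  by (simp add: ev_def imap_sum)

lemma ev_add: "ev c (\<lambda>j. f j + g j) = ev c f + ev c g"
  by (simp add: ev_def algebra_simps sum.distrib)

lemma ev_diff: "ev c (\<lambda>j. f j - g j) = ev c f - ev c g"
  by (simp add: ev_def algebra_simps sum_subtractf)

lemma ev_scale: "ev c (\<lambda>j. h * f j) = h * ev c f"
  by (simp add: ev_def algebra_simps sum_distrib_left)

lemma ev_sum: "ev c (\<lambda>j. \<Sum>k\<in>A. f k j) = (\<Sum>k\<in>A. ev c (f k))"
  unfolding ev_def by (simp add: sum_distrib_left sum.swap[of _ A])

lemma ev_zero: "ev c (\<lambda>j. 0) = 0"
  by (simp add: ev_def)


lemma mono_deg_add[simp]: "mono_deg (\<mu> + \<nu>) = mono_deg \<mu> + mono_deg \<nu>"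
  by (simp add: mono_deg_def lookup_add sum.distrib)

lemma mono_deg_zero[simp]: "mono_deg (0::'n::finite \<Rightarrow>\<^sub>0 nat) = 0"
  by (simp add: mono_deg_def)

lemma mono_deg_single1[simp]: "mono_deg (sng (j::'n::finite) (Suc 0)) = 1"
proof -
  have "(\<Sum>i\<in>UNIV. lk (sng j (Suc 0)) i) = (\<Sum>i\<in>UNIV. if i = j then 1 else 0)"
    by (rule sum.cong) (auto simp: lookup_single when_def)
  then show ?thesis by (simp add: mono_deg_def)
qed

definition hc :: "nat \<Rightarrow> ('n::finite, 'k::zero) mpoly \<Rightarrow> ('n, 'k) mpoly" where
  "hc d p = Poly_Mapping.mapp (\<lambda>\<mu> c. if mono_deg \<mu> = d then c else 0) p"

lemma lookup_hc: "lk (hc d p) \<mu> = (if mono_deg \<mu> = d then lk p \<mu> else 0)"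
  by (auto simp: hc_def lookup_mapp when_def in_keys_iff)

lemma hc_add: "hc d (p + q) = hc d p + hc d q"
  by (rule poly_mapping_eqI) (simp add: lookup_hc lookup_add)

lemma hc_diff: "hc d (p - q) = hc d p - (hc d q :: ('n::finite, 'k::ab_group_add) mpoly)"
  by (rule poly_mapping_eqI) (simp add: lookup_hc lookup_minus)

lemma hc_zero[simp]: "hc d 0 = 0"
  by (rule poly_mapping_eqI) (simp add: lookup_hc)

lemma hc_sum: "hc d (sum f A) = (\<Sum>x\<in>A. hc d (f x))"
  by (induction A rule: infinite_finite_induct) (auto simp: hc_add)

lemma hc_single: "hc d (sng \<mu> c) = (if mono_deg \<mu> = d then sng \<mu> c else 0)"
  by (rule poly_mapping_eqI) (auto simp: lookup_hc lookup_single when_def)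

lemma imap_hc: "imap (hc d p) = hc d (imap p)"
  by (rule poly_mapping_eqI) (simp add: lookup_hc)

lemma homog_keys: "homogeneous_of_deg d p \<longleftrightarrow> ks p \<subseteq> {\<mu>. mono_deg \<mu> = d}"
  by (auto simp: homogeneous_of_deg_def)

lemma homog_lookup: "homogeneous_of_deg d p \<Longrightarrow> mono_deg \<mu> \<noteq> d \<Longrightarrow> lk p \<mu> = 0"
  by (auto simp: homogeneous_of_deg_def in_keys_iff)

lemma homog_hc: "homogeneous_of_deg d (hc d p)"
  by (auto simp: homogeneous_of_deg_def in_keys_iff lookup_hc split: if_splits)

lemma hc_homog: "homogeneous_of_deg d p \<Longrightarrow> hc d p = p"
  by (rule poly_mapping_eqI) (auto simp: lookup_hc homog_lookup)

lemma hc_homog_other: "homogeneous_of_deg d p \<Longrightarrow> d' \<noteq> d \<Longrightarrow> hc d' p = 0"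
  by (rule poly_mapping_eqI) (auto simp: lookup_hc homog_lookup)

lemma homog_zero[simp]: "homogeneous_of_deg d 0"
  by (simp add: homogeneous_of_deg_def)

lemma homog_add: "homogeneous_of_deg d p \<Longrightarrow> homogeneous_of_deg d q \<Longrightarrow> homogeneous_of_deg d (p + q)"
  unfolding homog_keys using keys_add[of p q] by blast

lemma homog_diff: "homogeneous_of_deg d p \<Longrightarrow> homogeneous_of_deg d q \<Longrightarrow> homogeneous_of_deg d (p - (q :: ('n::finite,'k::ab_group_add) mpoly))"
  by (auto simp: homogeneous_of_deg_def in_keys_iff lookup_minus)

lemma homog_sum: "(\<And>x. x \<in> A \<Longrightarrow> homogeneous_of_deg d (f x)) \<Longrightarrow> homogeneous_of_deg d (sum f A)"
  by (induction A rule: infinite_finite_induct) (auto intro: homog_add)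

lemma homog_mult: "homogeneous_of_deg a p \<Longrightarrow> homogeneous_of_deg b q \<Longrightarrow> homogeneous_of_deg (a + b) (p * (q :: ('n::finite,'k::comm_ring_1) mpoly))"
proof -
  assume hp: "homogeneous_of_deg a p" and hq: "homogeneous_of_deg b q"
  show ?thesis unfolding homogeneous_of_deg_def
  proof
    fix \<kappa> assume "\<kappa> \<in> ks (p * q)"
    then obtain \<mu> \<nu> where "\<kappa> = \<mu> + \<nu>" "\<mu> \<in> ks p" "\<nu> \<in> ks q" using keys_mult[of p q] by blast
    then show "mono_deg \<kappa> = a + b" using hp hq by (simp add: homogeneous_of_deg_def)
  qed
qed

lemma homog_one: "homogeneous_of_deg 0 (1 :: ('n::finite,'k::comm_ring_1) mpoly)"
  by (auto simp: homogeneous_of_deg_def)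

lemma homog_power: "homogeneous_of_deg a p \<Longrightarrow> homogeneous_of_deg (k * a) (p ^ k :: ('n::finite,'k::comm_ring_1) mpoly)"
proof (induction k)
  case 0 then show ?case by (simp add: homog_one)
next
  case (Suc k)
  then have "homogeneous_of_deg (a + k * a) (p * p ^ k)" by (intro homog_mult)
  then show ?case by (simp add: add.commute)
qed

lemma homog_single: "homogeneous_of_deg (mono_deg \<mu>) (sng \<mu> c)"
  by (simp add: homogeneous_of_deg_def)

lemma homog_const: "homogeneous_of_deg 0 (mp_const c :: ('n::finite,'k::comm_ring_1) mpoly)"
  by (simp add: mp_const_def homogeneous_of_deg_def)

lemma homog_lin_form: "homogeneous_of_deg 1 (lin_form c)"
  unfolding lin_form_alt
proof (rule homog_sum)
  fix j
  have "homogeneous_of_deg (mono_deg (sng j (Suc 0))) (sng (sng j (Suc 0)) (c j))" by (rule homog_single)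
  then show "homogeneous_of_deg 1 (sng (sng j 1) (c j))" by simp
qed

lemma homog_imap: "homogeneous_of_deg d p \<Longrightarrow> homogeneous_of_deg d (imap p)"
  unfolding homog_keys by (erule subset_trans[OF keys_imap])

lemma homog_mono_hc: "homogeneous_of_deg d' p \<Longrightarrow> homogeneous_of_deg d' (hc d p)"
  by (auto simp: homogeneous_of_deg_def in_keys_iff lookup_hc split: if_splits)

lemma hc_decomp: "finite D \<Longrightarrow> mono_deg ` ks p \<subseteq> D \<Longrightarrow> p = (\<Sum>d\<in>D. hc d p)"
proof (rule poly_mapping_eqI)
  fix \<mu> assume D: "finite D" "mono_deg ` ks p \<subseteq> D"
  have "lk (\<Sum>d\<in>D. hc d p) \<mu> = (\<Sum>d\<in>D. if mono_deg \<mu> = d then lk p \<mu> else 0)"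
    by (simp add: lookup_sum lookup_hc)
  also have "\<dots> = lk p \<mu>"
  proof (cases "\<mu> \<in> ks p")
    case True
    then have "mono_deg \<mu> \<in> D" using D by auto
    then show ?thesis using D(1) by (simp add: sum.delta[of D "mono_deg \<mu>", simplified eq_commute])
  next
    case False
    then show ?thesis by (auto simp: in_keys_iff intro: sum.neutral)
  qed
  finally show "lk p \<mu> = lk (\<Sum>d\<in>D. hc d p) \<mu>" by simp
qed


lemma hc_mult_homog:
  assumes q: "homogeneous_of_deg e q"
  shows "hc d (p * q) = (if e \<le> d then hc (d - e) p * q else (0 :: ('n::finite,'k::comm_ring_1) mpoly))"
proof -
  have qd: "\<nu> \<in> ks q \<Longrightarrow> mono_deg \<nu> = e" for \<nu> using q by (auto simp: homogeneous_of_deg_def)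
  have "hc d (p * q) = hc d ((\<Sum>\<mu>\<in>ks p. sng \<mu> (lk p \<mu>)) * (\<Sum>\<nu>\<in>ks q. sng \<nu> (lk q \<nu>)))"
    using pm_expand[of p, symmetric] pm_expand[of q, symmetric] by (simp only:)
  also have "\<dots> = (\<Sum>\<mu>\<in>ks p. \<Sum>\<nu>\<in>ks q. hc d (sng (\<mu>+\<nu>) (lk p \<mu> * lk q \<nu>)))"
    by (simp add: sum_distrib_left sum_distrib_right hc_sum mult_single) (rule sum.swap)
  also have "\<dots> = (\<Sum>\<mu>\<in>ks p. \<Sum>\<nu>\<in>ks q. if e \<le> d \<and> mono_deg \<mu> = d - e then sng (\<mu>+\<nu>) (lk p \<mu> * lk q \<nu>) else 0)"
    by (intro sum.cong refl) (auto simp: hc_single qd)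
  also have "\<dots> = (if e \<le> d then (\<Sum>\<mu>\<in>ks p. hc (d-e) (sng \<mu> (lk p \<mu>))) * (\<Sum>\<nu>\<in>ks q. sng \<nu> (lk q \<nu>)) else 0)"
  proof (cases "e \<le> d")
    case True
    have "(\<Sum>\<mu>\<in>ks p. hc (d-e) (sng \<mu> (lk p \<mu>))) * (\<Sum>\<nu>\<in>ks q. sng \<nu> (lk q \<nu>))
       = (\<Sum>\<mu>\<in>ks p. \<Sum>\<nu>\<in>ks q. hc (d-e) (sng \<mu> (lk p \<mu>)) * sng \<nu> (lk q \<nu>))"
      by (simp only: sum_distrib_left sum_distrib_right) (rule sum.swap)
    also have "\<dots> = (\<Sum>\<mu>\<in>ks p. \<Sum>\<nu>\<in>ks q. if e \<le> d \<and> mono_deg \<mu> = d - e then sng (\<mu>+\<nu>) (lk p \<mu> * lk q \<nu>) else 0)"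
      by (intro sum.cong refl) (simp add: hc_single mult_single True)
    finally show ?thesis using True by simp
  qed simp
  also have "\<dots> = (if e \<le> d then hc (d - e) p * q else 0)"
  proof -
    have "hc (d-e) p = (\<Sum>\<mu>\<in>ks p. hc (d-e) (sng \<mu> (lk p \<mu>)))"
      by (subst pm_expand[of p]) (simp only: hc_sum)
    moreover have "(\<Sum>\<nu>\<in>ks q. sng \<nu> (lk q \<nu>)) = q" by (rule pm_expand[symmetric])
    ultimately show ?thesis by (simp only:)
  qed
  finally show ?thesis .
qed


lemma lk_le_mono_deg: "lk \<mu> j \<le> mono_deg (\<mu> :: 'n::finite \<Rightarrow>\<^sub>0 nat)"
  unfolding mono_deg_def by (rule member_le_sum) auto

lemma finite_mono_deg: "finite {\<mu> :: 'n::finite \<Rightarrow>\<^sub>0 nat. mono_deg \<mu> = d}"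
proof -
  have "lk ` {\<mu> :: 'n \<Rightarrow>\<^sub>0 nat. mono_deg \<mu> = d} \<subseteq> PiE UNIV (\<lambda>_. {..d})"
  proof
    fix f assume "f \<in> lk ` {\<mu> :: 'n \<Rightarrow>\<^sub>0 nat. mono_deg \<mu> = d}"
    then obtain \<mu> :: "'n \<Rightarrow>\<^sub>0 nat" where mu: "f = lk \<mu>" "mono_deg \<mu> = d" by blast
    have "\<forall>j. lk \<mu> j \<in> {..d}" using lk_le_mono_deg[of \<mu>] mu(2) by simp
    then show "f \<in> PiE UNIV (\<lambda>_. {..d})" using mu(1) by (simp add: PiE_UNIV_domain Pi_def)
  qed
  then have "finite (lk ` {\<mu> :: 'n \<Rightarrow>\<^sub>0 nat. mono_deg \<mu> = d})"
    by (rule finite_subset) (simp add: finite_PiE)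
  moreover have "inj_on lk {\<mu> :: 'n \<Rightarrow>\<^sub>0 nat. mono_deg \<mu> = d}"
    by (rule inj_onI, rule poly_mapping_eqI, simp)
  ultimately show ?thesis by (rule finite_imageD)
qed


lemma lookup_single_mult: "lk (sng \<kappa> a * H) \<nu> = a * Sum_any (\<lambda>q. lk H q when \<nu> = \<kappa> + q)"
proof -
  have "lk (sng \<kappa> a * H) \<nu> = Sum_any (\<lambda>l. (a when \<kappa> = l) * Sum_any (\<lambda>q. lk H q when \<nu> = l + q))"
    by (simp add: lookup_mult lookup_single)
  also have "\<dots> = Sum_any (\<lambda>l. (a * Sum_any (\<lambda>q. lk H q when \<nu> = l + q)) when \<kappa> = l)"
    by (simp add: when_mult)
  also have "\<dots> = a * Sum_any (\<lambda>q. lk H q when \<nu> = \<kappa> + q)"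
    by simp
  finally show ?thesis .
qed

lemma lookup_single_mult_shift:
  "lk (sng \<kappa> a * H) (\<kappa> + \<nu>) = a * lk H (\<nu> :: ('n \<Rightarrow>\<^sub>0 nat))"
  by (simp add: lookup_single_mult)

lemma lookup_single_mult_zero:
  assumes "\<And>q. \<nu> = \<kappa> + q \<Longrightarrow> lk H q = 0"
  shows "lk (sng \<kappa> a * H) \<nu> = 0"
proof -
  have "(\<lambda>q. lk H q when \<nu> = \<kappa> + q) = (\<lambda>q. 0)"
    by (rule ext) (use assms in \<open>auto simp: when_def\<close>)
  then have "Sum_any (\<lambda>q. lk H q when \<nu> = \<kappa> + q) = 0" by (metis Sum_any.neutral)
  then show ?thesis by (simp add: lookup_single_mult)
qed

lemma lin_form_mult_nz:
  fixes c :: "'n::finite \<Rightarrow> 'k::idom"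
  assumes cj: "c j \<noteq> 0" and H: "H \<noteq> 0"
  shows "lin_form c * H \<noteq> 0"
proof -
  define M where "M = Max ((\<lambda>\<mu>. lk \<mu> j) ` ks H)"
  have fin: "finite ((\<lambda>\<mu>. lk \<mu> j) ` ks H)" by simp
  have ne: "ks H \<noteq> {}" using H by simp
  have ne': "(\<lambda>\<mu>. lk \<mu> j) ` ks H \<noteq> {}" using ne by simp
  obtain \<mu>0 where mu0': "\<mu>0 \<in> ks H" "M = lk \<mu>0 j"
    using Max_in[OF fin ne'] unfolding M_def by blast
  then have mu0: "\<mu>0 \<in> ks H" "lk \<mu>0 j = M" by auto
  have Mmax: "\<mu> \<in> ks H \<Longrightarrow> lk \<mu> j \<le> M" for \<mu>
    unfolding M_def using fin by auto
  define \<nu> where "\<nu> = sng j 1 + \<mu>0"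
  have "lk (lin_form c * H) \<nu> = (\<Sum>i\<in>UNIV. lk (sng (sng i 1) (c i) * H) \<nu>)"
    by (simp add: lin_form_alt sum_distrib_right lookup_sum)
  also have "\<dots> = (\<Sum>i\<in>UNIV. if i = j then c j * lk H \<mu>0 else 0)"
  proof (rule sum.cong)
    fix i assume "i \<in> (UNIV :: 'n set)"
    show "lk (sng (sng i 1) (c i) * H) \<nu> = (if i = j then c j * lk H \<mu>0 else 0)"
    proof (cases "i = j")
      case True
      then show ?thesis unfolding \<nu>_def by (simp add: lookup_single_mult_shift)
    next
      case False
      have "lk H q = 0" if "\<nu> = sng i 1 + q" for q
      proof -
        have "lk \<nu> j = lk q j" using that False by (simp add: lookup_add lookup_single when_def)
        moreover have "lk \<nu> j = Suc M" unfolding \<nu>_def using mu0 by (simp add: lookup_add)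
        ultimately have "q \<notin> ks H" using Mmax by fastforce
        then show ?thesis by (simp add: in_keys_iff)
      qed
      then show ?thesis using False by (simp add: lookup_single_mult_zero)
    qed
  qed simp
  also have "\<dots> = c j * lk H \<mu>0" by simp
  finally have "lk (lin_form c * H) \<nu> \<noteq> 0" using cj mu0(1) by (simp add: in_keys_iff)
  then show ?thesis by auto
qed

lemma lin_form_power_mult_nz:
  fixes c :: "'n::finite \<Rightarrow> 'k::idom"
  assumes cj: "c j \<noteq> 0" and H: "H \<noteq> 0"
  shows "lin_form c ^ k * H \<noteq> 0"
proof (induction k)
  case 0 then show ?case using H by simp
next
  case (Suc k)
  then show ?case using lin_form_mult_nz[of c j, OF cj Suc.IH] by (simp add: mult.assoc)
qed

lemma lookup_lin_form: "lk (lin_form c) (sng i (Suc 0)) = c i"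
proof -
  have "lk (lin_form c) (sng i 1) = (\<Sum>i'\<in>UNIV. (c i' when sng i' (1::nat) = sng i 1))"
    by (simp add: lin_form_alt lookup_sum lookup_single)
  also have "\<dots> = (\<Sum>i'\<in>UNIV. if i' = i then c i else 0)"
    by (rule sum.cong) (auto simp: when_def)
  finally show ?thesis by simp
qed

lemma of_int_modring_0: "(of_int x :: 'p::prime_card mod_ring) = 0 \<longleftrightarrow> int CARD('p) dvd x"
  by (simp add: of_int_eq_0_iff_char_dvd)

lemma red_p_imap: "red_p = imap"
  by (simp add: red_p_def imap_def fun_eq_iff)

lemma red_zero_dvd:
  assumes "(imap f :: ('n::finite, 'p::prime_card mod_ring) mpoly) = 0"
  shows "f = mp_const (int CARD('p)) * Poly_Mapping.map (\<lambda>x. x div int CARD('p)) f"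
proof (rule poly_mapping_eqI)
  fix \<mu>
  have "(of_int (lk f \<mu>) :: 'p mod_ring) = 0"
    using arg_cong[OF assms, of "\<lambda>F. lk F \<mu>"] by simp
  then have "int CARD('p) dvd lk f \<mu>" by (simp add: of_int_modring_0)
  then show "lk f \<mu> = lk (mp_const (int CARD('p)) * Poly_Mapping.map (\<lambda>x. x div int CARD('p)) f) \<mu>"
    by (simp add: lookup_const_mult lookup_map0)
qed

lemma const_cancel:
  assumes "c \<noteq> (0::'k::idom)" "mp_const c * A = mp_const c * B"
  shows "A = B"
proof (rule poly_mapping_eqI)
  fix \<mu> show "lk A \<mu> = lk B \<mu>"
    using arg_cong[OF assms(2), of "\<lambda>F. lk F \<mu>"] assms(1) by (simp add: lookup_const_mult)
qed

lemma red_card: "(imap (mp_const (int CARD('p))) :: ('n::finite, 'p::prime_card mod_ring) mpoly) = 0"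
  by simp

definition lift :: "('n::finite, 'p::prime_card mod_ring) mpoly \<Rightarrow> ('n, int) mpoly" where
  "lift F = Poly_Mapping.map to_int_mod_ring F"

lemma to_int_mod_ring_0[simp]: "to_int_mod_ring (0 :: 'p::prime_card mod_ring) = 0"
  by transfer simp

lemma lookup_lift: "lk (lift F) \<mu> = to_int_mod_ring (lk F \<mu>)"
  by (simp add: lift_def lookup_map0)

lemma lift_zero[simp]: "lift 0 = 0"
  by (rule poly_mapping_eqI) (simp add: lookup_lift)

lemma imap_lift: "imap (lift F) = F"
  by (rule poly_mapping_eqI) (simp add: lookup_lift of_int_of_int_mod_ring)

lemma keys_lift: "ks (lift F) \<subseteq> ks F"
  by (auto simp: in_keys_iff lookup_lift)

lemma homog_lift: "homogeneous_of_deg d F \<Longrightarrow> homogeneous_of_deg d (lift F)"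
  unfolding homog_keys by (erule subset_trans[OF keys_lift])

lemma lift_range: "0 \<le> lk (lift F) \<mu> \<and> lk (lift F) \<mu> < int CARD('p)"
  for F :: "('n::finite, 'p::prime_card mod_ring) mpoly"
  using range_to_int_mod_ring[where 'a='p] by (auto simp: lookup_lift)


definition comb :: "('n \<Rightarrow> 'a::comm_ring_1) \<Rightarrow> ('n \<Rightarrow> 'n \<Rightarrow> 'a) \<Rightarrow> 'n::finite \<Rightarrow> 'a" where
  "comb c G = (\<lambda>j. \<Sum>k\<in>UNIV. c k * G k j)"

lemma comb_add: "(\<lambda>j. comb u G j + comb v G j) = comb (\<lambda>k. u k + v k) G"
  by (simp add: comb_def algebra_simps sum.distrib)

lemma comb_scale: "(\<lambda>j. h * comb u G j) = comb (\<lambda>k. h * u k) G"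
  by (simp add: comb_def algebra_simps sum_distrib_left)

lemma comb_add_pt: "comb u G j + comb v G j = comb (\<lambda>k. u k + v k) G j"
  by (simp add: comb_def algebra_simps sum.distrib)

lemma comb_scale_pt: "h * comb u G j = comb (\<lambda>k. h * u k) G j"
  by (simp add: comb_def algebra_simps sum_distrib_left)

lemma comb_zero: "comb (\<lambda>k. 0) G = (\<lambda>j. 0)"
  by (simp add: comb_def)

lemma comb_sum: "finite S \<Longrightarrow> (\<lambda>j. \<Sum>d\<in>S. comb (u d) G j) = comb (\<lambda>k. \<Sum>d\<in>S. u d k) G"
  by (simp add: comb_def sum_distrib_right sum.swap[of _ S])

lemma imap_comb: "(\<lambda>j. imap (comb c g j)) = comb (\<lambda>k. imap (c k)) (\<lambda>k j. imap (g k j))"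
  by (simp add: comb_def imap_sum)

lemma imap_inj_rat: "(imap A :: ('n, rat) mpoly) = imap B \<Longrightarrow> A = B"
proof (rule poly_mapping_eqI)
  fix \<mu> assume "(imap A :: ('n, rat) mpoly) = imap B"
  then have "(of_int (lk A \<mu>) :: rat) = of_int (lk B \<mu>)"
    by (metis lookup_imap)
  then show "lk A \<mu> = lk B \<mu>" by simp
qed

lemma finite_bounded_polys:
  assumes "finite M" "finite S"
  shows "finite {f :: ('n \<Rightarrow>\<^sub>0 nat) \<Rightarrow>\<^sub>0 int. ks f \<subseteq> M \<and> (\<forall>\<mu>. lk f \<mu> \<in> S)}"
proof -
  let ?A = "{f :: ('n \<Rightarrow>\<^sub>0 nat) \<Rightarrow>\<^sub>0 int. ks f \<subseteq> M \<and> (\<forall>\<mu>. lk f \<mu> \<in> S)}"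
  have "(\<lambda>f. restrict (lk f) M) ` ?A \<subseteq> PiE M (\<lambda>_. S)" by auto
  then have "finite ((\<lambda>f. restrict (lk f) M) ` ?A)"
    by (rule finite_subset) (simp add: finite_PiE assms)
  moreover have "inj_on (\<lambda>f. restrict (lk f) M) ?A"
  proof (rule inj_onI)
    fix f f' assume f: "f \<in> ?A" "f' \<in> ?A" and eq: "restrict (lk f) M = restrict (lk f') M"
    show "f = f'"
    proof (rule poly_mapping_eqI)
      fix \<mu> show "lk f \<mu> = lk f' \<mu>"
      proof (cases "\<mu> \<in> M")
        case True then show ?thesis using fun_cong[OF eq, of \<mu>] by simp
      next
        case False then have "\<mu> \<notin> ks f" "\<mu> \<notin> ks f'" using f by auto
        then show ?thesis by (simp add: in_keys_iff)
      qed
    qed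
  qed
  ultimately show ?thesis by (rule finite_imageD)
qed

lemma finite_vec: "finite F \<Longrightarrow> finite {\<Delta> :: 'n::finite \<Rightarrow> 'b. \<forall>j. \<Delta> j \<in> F}"
proof -
  assume "finite F"
  then have "finite (PiE (UNIV :: 'n set) (\<lambda>_. F))" by (simp add: finite_PiE)
  moreover have "{\<Delta> :: 'n \<Rightarrow> 'b. \<forall>j. \<Delta> j \<in> F} = PiE UNIV (\<lambda>_. F)"
    by (auto simp: PiE_def)
  ultimately show ?thesis by simp
qed

lemma finite_vec2: "(\<And>j. finite (F j)) \<Longrightarrow> finite {\<Delta> :: 'n::finite \<Rightarrow> 'b. \<forall>j. \<Delta> j \<in> F j}"
proof -
  assume "\<And>j. finite (F j)"
  then have "finite (PiE (UNIV :: 'n set) F)" by (simp add: finite_PiE)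
  moreover have "{\<Delta> :: 'n \<Rightarrow> 'b. \<forall>j. \<Delta> j \<in> F j} = PiE UNIV F"
    by (auto simp: PiE_def)
  ultimately show ?thesis by simp
qed

lemma absB: "\<bar>x::int\<bar> \<le> B \<Longrightarrow> x \<in> {-B..B}"
  by auto

lemma coeff_bound_single: "\<exists>K\<ge>0. \<forall>\<mu>. \<bar>lk (f :: ('n \<Rightarrow>\<^sub>0 nat) \<Rightarrow>\<^sub>0 int) \<mu>\<bar> \<le> K"
proof (intro exI conjI allI)
  show "0 \<le> (\<Sum>\<nu>\<in>ks f. \<bar>lk f \<nu>\<bar>)" by (rule sum_nonneg) auto
  fix \<mu> show "\<bar>lk f \<mu>\<bar> \<le> (\<Sum>\<nu>\<in>ks f. \<bar>lk f \<nu>\<bar>)"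
  proof (cases "\<mu> \<in> ks f")
    case True then show ?thesis by (intro member_le_sum) auto
  next
    case False then show ?thesis by (simp add: in_keys_iff sum_nonneg)
  qed
qed

lemma coeff_bound_finite:
  assumes "finite A"
  shows "\<exists>K\<ge>0. \<forall>x\<in>A. \<forall>\<mu>. \<bar>lk (F x :: ('n \<Rightarrow>\<^sub>0 nat) \<Rightarrow>\<^sub>0 int) \<mu>\<bar> \<le> K"
  using assms
proof (induction A rule: finite_induct)
  case empty then show ?case by auto
next
  case (insert x A)
  obtain K where K: "K \<ge> 0" "\<forall>y\<in>A. \<forall>\<mu>. \<bar>lk (F y) \<mu>\<bar> \<le> K" using insert.IH by auto
  obtain K' where K': "K' \<ge> 0" "\<forall>\<mu>. \<bar>lk (F x) \<mu>\<bar> \<le> K'" using coeff_bound_single by blast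
  show ?case
    by (rule exI[of _ "max K K'"]) (use K K' in \<open>auto simp: le_max_iff_disj\<close>)
qed

lemma common_denom:
  assumes "finite (X :: rat set)"
  shows "\<exists>D::int. D > 0 \<and> (\<forall>x\<in>X. of_int D * x \<in> \<int>)"
  using assms
proof (induction X rule: finite_induct)
  case empty then show ?case by (intro exI[of _ 1]) auto
next
  case (insert x X)
  obtain D where D: "D > 0" "\<forall>y\<in>X. of_int D * y \<in> \<int>" using insert.IH by auto
  obtain nu de where q: "quotient_of x = (nu, de)" by (cases "quotient_of x") auto
  have de: "de > 0" using quotient_of_denom_pos[OF q] .
  have xq: "x = of_int nu / of_int de" using quotient_of_div[OF q] .
  have dx: "of_int de * x = of_int nu" using de by (simp add: xq)
  have h1: "of_int (D * de) * x \<in> \<int>"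
  proof -
    have "of_int (D * de) * x = of_int D * (of_int de * x)" by (simp only: of_int_mult mult.assoc)
    also have "\<dots> = of_int (D * nu)" by (simp add: dx)
    finally show ?thesis by (simp only: Ints_of_int)
  qed
  have h2: "of_int (D * de) * y \<in> \<int>" if "y \<in> X" for y
  proof -
    have "of_int (D * de) * y = of_int de * (of_int D * y)" by simp
    then show ?thesis using D(2) that by (metis Ints_mult Ints_of_int)
  qed
  show ?case
  proof (intro exI conjI)
    show "D * de > 0" using D(1) de by simp
    show "\<forall>y\<in>insert x X. of_int (D * de) * y \<in> \<int>" using h1 h2 by blast
  qed
qed

lemma common_denom_polys:
  assumes "finite I"
  shows "\<exists>D::int. D > 0 \<and> (\<forall>i\<in>I. \<exists>v. mp_const (of_int D) * (F i :: ('n::finite, rat) mpoly) = imap v)"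
proof -
  let ?X = "\<Union>i\<in>I. lk (F i) ` ks (F i)"
  have "finite ?X" using assms by auto
  then obtain D :: int where D: "D > 0" "\<forall>x\<in>?X. of_int D * x \<in> \<int>" using common_denom by blast
  have "\<exists>v. mp_const (of_int D) * F i = imap v" if i: "i \<in> I" for i
  proof (intro exI poly_mapping_eqI)
    fix \<mu>
    have "of_int \<lfloor>of_int D * lk (F i) \<mu>\<rfloor> = of_int D * lk (F i) \<mu>"
    proof (cases "\<mu> \<in> ks (F i)")
      case True
      then have "of_int D * lk (F i) \<mu> \<in> \<int>" using D(2) i by auto
      then obtain z where "of_int D * lk (F i) \<mu> = of_int z" by (auto elim: Ints_cases)
      then show ?thesis by simp
    next
      case False then show ?thesis by (simp add: in_keys_iff)
    qed
    note fl = this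
    have "lk (mp_const (of_int D) * F i) \<mu> = of_int D * lk (F i) \<mu>" by (rule lookup_const_mult)
    also have "\<dots> = of_int \<lfloor>of_int D * lk (F i) \<mu>\<rfloor>" by (rule fl[symmetric])
    also have "\<dots> = lk (imap (Poly_Mapping.map (\<lambda>x. \<lfloor>of_int D * x\<rfloor>) (F i))) \<mu>"
      by (simp add: lookup_map0)
    finally show "lk (mp_const (of_int D) * F i) \<mu> = lk (imap (Poly_Mapping.map (\<lambda>x. \<lfloor>of_int D * x\<rfloor>) (F i))) \<mu>" .
  qed
  then show ?thesis using D(1) by blast
qed


locale core =
  fixes a :: "nat \<Rightarrow> 'n::finite \<Rightarrow> int" and n :: nat and m :: "nat \<Rightarrow> nat" and e :: "'n \<Rightarrow> nat"
    and g :: "'n \<Rightarrow> 'n \<Rightarrow> ('n, int) mpoly" and pty :: "'p::prime_card itself"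
  assumes gK: "\<And>k. g k \<in> ker_phi_Z n a m"
    and gH: "\<And>k. homog_deriv (e k) (g k)"
    and uniq: "\<forall>\<delta>\<in>deriv_module n (\<lambda>i k. (of_int (a i k) :: 'p mod_ring)) m.
                 \<exists>!c. \<delta> = comb c (\<lambda>k j. imap (g k j))"
    and nz: "\<And>i. i < n \<Longrightarrow> \<exists>j. (of_int (a i j) :: 'p mod_ring) \<noteq> 0"
begin



lemma P_ge2: "(int CARD('p)) \<ge> 2"
  using prime_card[where 'a='p] prime_ge_2_nat by fastforce

lemma mem_KZ: "\<Delta> \<in> (ker_phi_Z n a m) \<longleftrightarrow> (\<forall>i<n. lin_form (a i) ^ m i dvd ev (a i) \<Delta>)"
  by (simp add: ker_alt)

lemma KZ_comb: "(\<And>k. G k \<in> (ker_phi_Z n a m)) \<Longrightarrow> comb c G \<in> (ker_phi_Z n a m)"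
  unfolding mem_KZ comb_def by (auto simp: ev_sum ev_scale intro!: dvd_sum dvd_mult)

lemma KZ_diff: "A \<in> (ker_phi_Z n a m) \<Longrightarrow> B \<in> (ker_phi_Z n a m) \<Longrightarrow> (\<lambda>j. A j - B j) \<in> (ker_phi_Z n a m)"
  unfolding mem_KZ by (auto simp: ev_diff)

lemma KZ_hc: "\<Delta> \<in> (ker_phi_Z n a m) \<Longrightarrow> (\<lambda>j. hc d (\<Delta> j)) \<in> (ker_phi_Z n a m)"
  unfolding mem_KZ
proof (intro allI impI)
  fix i assume A: "\<forall>i<n. lin_form (a i) ^ m i dvd ev (a i) \<Delta>" and i: "i < n"
  obtain H where H: "ev (a i) \<Delta> = H * lin_form (a i) ^ m i" using A i by (auto elim!: dvdE simp: mult.commute)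
  have hp: "homogeneous_of_deg (m i * 1) (lin_form (a i) ^ m i)"
    by (rule homog_power) (rule homog_lin_form)
  have "ev (a i) (\<lambda>j. hc d (\<Delta> j)) = hc d (ev (a i) \<Delta>)"
    unfolding ev_def hc_sum
    by (intro sum.cong refl) (simp add: mult.commute[of "mp_const _"] hc_mult_homog[OF homog_const])
  also have "\<dots> = (if m i * 1 \<le> d then hc (d - m i * 1) H * lin_form (a i) ^ m i else 0)"
    unfolding H by (rule hc_mult_homog[OF hp])
  finally show "lin_form (a i) ^ m i dvd ev (a i) (\<lambda>j. hc d (\<Delta> j))" by simp
qed

lemma KZ_imap: "\<Delta> \<in> (ker_phi_Z n a m) \<Longrightarrow> (\<lambda>j. imap (\<Delta> j) :: ('n, 'k::comm_ring_1) mpoly) \<in> deriv_module n (\<lambda>i k. of_int (a i k)) m"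
  unfolding mem_KZ deriv_module_alt
proof (intro CollectI allI impI)
  fix i assume A: "\<forall>i<n. lin_form (a i) ^ m i dvd ev (a i) \<Delta>" and i: "i < n"
  obtain H where H: "ev (a i) \<Delta> = lin_form (a i) ^ m i * H" using A i by (auto elim: dvdE)
  have "(ev (\<lambda>k. of_int (a i k)) (\<lambda>j. imap (\<Delta> j)) :: ('n, 'k) mpoly) = imap (ev (a i) \<Delta>)"
    by (simp add: ev_imap)
  also have "\<dots> = lin_form (\<lambda>k. of_int (a i k)) ^ m i * imap H"
    by (simp add: H lin_form_imap)
  finally show "lin_form (\<lambda>k. of_int (a i k)) ^ m i dvd (ev (\<lambda>k. of_int (a i k)) (\<lambda>j. imap (\<Delta> j)) :: ('n, 'k) mpoly)"
    by simp
qed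

lemma KZ_divp:
  assumes "(\<lambda>j. mp_const (int CARD('p)) * \<Delta> j) \<in> (ker_phi_Z n a m)"
  shows "\<Delta> \<in> (ker_phi_Z n a m)"
  unfolding mem_KZ
proof (intro allI impI)
  fix i assume i: "i < n"
  have "lin_form (a i) ^ m i dvd ev (a i) (\<lambda>j. mp_const (int CARD('p)) * \<Delta> j)"
    using assms i unfolding mem_KZ by blast
  then have "lin_form (a i) ^ m i dvd mp_const (int CARD('p)) * ev (a i) \<Delta>" by (simp only: ev_scale)
  then obtain H where H: "mp_const (int CARD('p)) * ev (a i) \<Delta> = lin_form (a i) ^ m i * H"
    by (elim dvdE)
  have "(imap H :: ('n, 'p mod_ring) mpoly) = 0"
  proof (rule ccontr)
    assume nz0: "(imap H :: ('n, 'p mod_ring) mpoly) \<noteq> 0"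
    obtain j where j: "(of_int (a i j) :: 'p mod_ring) \<noteq> 0" using nz[OF i] by (rule exE)
    have "lin_form (\<lambda>k. (of_int (a i k) :: 'p mod_ring)) ^ m i * imap H \<noteq> 0"
      by (rule lin_form_power_mult_nz[OF _ nz0]) (use j in simp)
    moreover have "(imap (mp_const (int CARD('p)) * ev (a i) \<Delta>) :: ('n, 'p mod_ring) mpoly) = 0" by simp
    ultimately show False by (simp add: H lin_form_imap)
  qed
  define H' where "H' = Poly_Mapping.map (\<lambda>x. x div (int CARD('p))) H"
  have Hd: "H = mp_const (int CARD('p)) * H'" unfolding H'_def by (rule red_zero_dvd) fact
  have "mp_const (int CARD('p)) * ev (a i) \<Delta> = mp_const (int CARD('p)) * (lin_form (a i) ^ m i * H')"
    unfolding H Hd by (simp only: mult.left_commute)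
  then have "ev (a i) \<Delta> = lin_form (a i) ^ m i * H'"
    by (rule const_cancel[rotated]) simp
  then show "lin_form (a i) ^ m i dvd ev (a i) \<Delta>" by simp
qed

definition Cset :: "nat \<Rightarrow> ('n \<Rightarrow> ('n, int) mpoly) set" where
  "Cset d = {c. \<forall>k. homogeneous_of_deg (d - e k) (c k) \<and> (d < e k \<longrightarrow> c k = 0) \<and>
                   (\<forall>\<mu>. 0 \<le> lk (c k) \<mu> \<and> lk (c k) \<mu> < (int CARD('p)))}"

lemma finite_Cset: "finite (Cset d)"
proof -
  let ?F = "\<lambda>k. {f :: ('n, int) mpoly. ks f \<subseteq> {\<mu>. mono_deg \<mu> = d - e k} \<and> (\<forall>\<mu>. lk f \<mu> \<in> {0..<int CARD('p)})}"
  have "finite {c :: 'n \<Rightarrow> ('n, int) mpoly. \<forall>k. c k \<in> ?F k}"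
    by (intro finite_vec2 finite_bounded_polys finite_mono_deg) simp
  moreover have "Cset d \<subseteq> {c. \<forall>k. c k \<in> ?F k}"
  proof
    fix c assume "c \<in> Cset d"
    then have "homogeneous_of_deg (d - e k) (c k) \<and> (\<forall>\<mu>. 0 \<le> lk (c k) \<mu> \<and> lk (c k) \<mu> < int CARD('p))" for k
      unfolding Cset_def by blast
    then show "c \<in> {c. \<forall>k. c k \<in> ?F k}" unfolding homog_keys by simp
  qed
  ultimately show ?thesis by (rule finite_subset[rotated])
qed

definition Bset :: "nat \<Rightarrow> int \<Rightarrow> ('n \<Rightarrow> ('n, int) mpoly) set" where
  "Bset d B = {\<Delta>. \<forall>j. homogeneous_of_deg d (\<Delta> j) \<and> (\<forall>\<mu>. \<bar>lk (\<Delta> j) \<mu>\<bar> \<le> B)}"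

lemma finite_Bset: "finite (Bset d B)"
proof -
  let ?F = "{f :: ('n, int) mpoly. ks f \<subseteq> {\<mu>. mono_deg \<mu> = d} \<and> (\<forall>\<mu>. lk f \<mu> \<in> {-B..B})}"
  have "finite ?F" by (intro finite_bounded_polys finite_mono_deg) simp
  then have "finite {c :: 'n \<Rightarrow> ('n, int) mpoly. \<forall>k. c k \<in> ?F}" by (rule finite_vec)
  moreover have "Bset d B \<subseteq> {c. \<forall>k. c k \<in> ?F}"
  proof
    fix c assume "c \<in> Bset d B"
    then have "homogeneous_of_deg d (c k) \<and> (\<forall>\<mu>. \<bar>lk (c k) \<mu>\<bar> \<le> B)" for k
      unfolding Bset_def by blast
    then have "ks (c k) \<subseteq> {\<mu>. mono_deg \<mu> = d} \<and> (\<forall>\<mu>. lk (c k) \<mu> \<in> {-B..B})" for k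
      unfolding homog_keys using absB by blast
    then show "c \<in> {c. \<forall>k. c k \<in> ?F}" by simp
  qed
  ultimately show ?thesis by (rule finite_subset[rotated])
qed

lemma step:
  assumes D: "\<Delta> \<in> (ker_phi_Z n a m)" "homog_deriv d \<Delta>"
  shows "\<exists>c \<Delta>'. \<Delta> = (\<lambda>j. comb c g j + mp_const (int CARD('p)) * \<Delta>' j) \<and> \<Delta>' \<in> (ker_phi_Z n a m) \<and> homog_deriv d \<Delta>' \<and> c \<in> Cset d"
proof -
  let ?\<theta> = "\<lambda>k j. (imap (g k j) :: ('n, 'p mod_ring) mpoly)"
  have th_h: "homogeneous_of_deg (e k) (?\<theta> k j)" for k j
    using gH by (simp add: homog_deriv_def homog_imap)
  have "(\<lambda>j. imap (\<Delta> j) :: ('n, 'p mod_ring) mpoly) \<in> deriv_module n (\<lambda>i k. of_int (a i k)) m"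
    using D(1) by (rule KZ_imap)
  then obtain cb where cb: "(\<lambda>j. imap (\<Delta> j) :: ('n, 'p mod_ring) mpoly) = comb cb ?\<theta>"
    using uniq by blast
  define c' where "c' k = (if e k \<le> d then hc (d - e k) (cb k) else 0)" for k
  have red1: "imap (\<Delta> j) = comb c' ?\<theta> j" for j
  proof -
    have "(imap (\<Delta> j) :: ('n, 'p mod_ring) mpoly) = hc d (imap (\<Delta> j))"
      using D(2) by (simp add: homog_deriv_def hc_homog homog_imap)
    also have "\<dots> = hc d (comb cb ?\<theta> j)" using cb by metis
    also have "\<dots> = comb c' ?\<theta> j"
      unfolding comb_def hc_sum c'_def by (intro sum.cong refl) (simp add: hc_mult_homog[OF th_h])
    finally show ?thesis .
  qed
  define c where "c k = lift (c' k)" for k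
  have imc: "imap (c k) = c' k" for k by (simp add: c_def imap_lift)
  define R where "R j = \<Delta> j - comb c g j" for j
  have R0: "(imap (R j) :: ('n, 'p mod_ring) mpoly) = 0" for j
  proof -
    have "(imap (comb c g j) :: ('n, 'p mod_ring) mpoly) = comb c' ?\<theta> j"
      by (simp add: comb_def imap_sum imc)
    then show ?thesis by (simp add: R_def red1)
  qed
  define \<Delta>' where "\<Delta>' j = Poly_Mapping.map (\<lambda>x. x div (int CARD('p))) (R j)" for j
  have R_eq: "R j = mp_const (int CARD('p)) * \<Delta>' j" for j
    unfolding \<Delta>'_def by (rule red_zero_dvd[OF R0])
  have RK: "R \<in> (ker_phi_Z n a m)"
  proof -
    have "(\<lambda>j. \<Delta> j - comb c g j) \<in> (ker_phi_Z n a m)" by (rule KZ_diff[OF D(1) KZ_comb[OF gK]])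
    then show ?thesis by (simp add: R_def[abs_def])
  qed
  have D'K: "\<Delta>' \<in> (ker_phi_Z n a m)" by (rule KZ_divp) (use RK R_eq in \<open>simp add: fun_eq_iff[symmetric] R_eq[abs_def, symmetric]\<close>)
  have ch: "homogeneous_of_deg (d - e k) (c k)" for k
    by (auto simp: c_def c'_def intro!: homog_lift homog_hc)
  have RH: "homogeneous_of_deg d (R j)" for j
  proof -
    have "homogeneous_of_deg d (comb c g j)"
      unfolding comb_def
    proof (rule homog_sum)
      fix k
      show "homogeneous_of_deg d (c k * g k j)"
      proof (cases "e k \<le> d")
        case True
        then show ?thesis using homog_mult[OF ch[of k] gH[unfolded homog_deriv_def, rule_format, of k j]] by simp
      next
        case False
        then show ?thesis by (simp add: c_def c'_def)
      qed
    qed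
    then show ?thesis using D(2) by (simp add: R_def homog_deriv_def homog_diff)
  qed
  have D'H: "homog_deriv d \<Delta>'"
    unfolding homog_deriv_def
  proof
    fix j
    have "ks (\<Delta>' j) \<subseteq> ks (R j)" by (auto simp: R_eq in_keys_iff lookup_const_mult)
    then show "homogeneous_of_deg d (\<Delta>' j)" using RH[of j] unfolding homog_keys by blast
  qed
  have c0: "d < e k \<Longrightarrow> c k = 0" for k by (simp add: c_def c'_def)
  have cr: "0 \<le> lk (c k) \<mu> \<and> lk (c k) \<mu> < int CARD('p)" for k \<mu> unfolding c_def by (rule lift_range)
  have cC: "c \<in> Cset d"
    unfolding Cset_def using ch c0 cr by blast
  have "\<Delta> = (\<lambda>j. comb c g j + mp_const (int CARD('p)) * \<Delta>' j)"
    by (rule ext) (simp add: R_eq[symmetric] R_def)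
  then show ?thesis using D'K D'H cC by blast
qed

end


context core
begin

definition thQ :: "'n \<Rightarrow> 'n \<Rightarrow> ('n, rat) mpoly" where
  "thQ k j = imap (g k j)"

lemma imap_comb_Q: "(imap (comb c g j) :: ('n, rat) mpoly) = comb (\<lambda>k. imap (c k)) thQ j"
  by (simp add: comb_def imap_sum thQ_def)

lemma repr_homog:
  assumes D0: "\<Delta>0 \<in> ker_phi_Z n a m" "homog_deriv d \<Delta>0"
  shows "\<exists>u. (\<lambda>j. (imap (\<Delta>0 j) :: ('n, rat) mpoly)) = comb u thQ"
proof -
  define PP where "PP = int CARD('p)"
  have PP2: "PP \<ge> 2" using P_ge2 by (simp add: PP_def)
  define good where "good \<Delta> \<longleftrightarrow> \<Delta> \<in> ker_phi_Z n a m \<and> homog_deriv d \<Delta>" for \<Delta>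
  have "\<forall>\<Delta>. \<exists>cD. good \<Delta> \<longrightarrow> (\<Delta> = (\<lambda>j. comb (fst cD) g j + mp_const PP * snd cD j) \<and> good (snd cD) \<and> fst cD \<in> Cset d)"
  proof
    fix \<Delta>
    show "\<exists>cD. good \<Delta> \<longrightarrow> (\<Delta> = (\<lambda>j. comb (fst cD) g j + mp_const PP * snd cD j) \<and> good (snd cD) \<and> fst cD \<in> Cset d)"
    proof (cases "good \<Delta>")
      case True
      then obtain c \<Delta>' where "\<Delta> = (\<lambda>j. comb c g j + mp_const PP * \<Delta>' j)" "\<Delta>' \<in> ker_phi_Z n a m"
          "homog_deriv d \<Delta>'" "c \<in> Cset d"
        using step unfolding good_def PP_def by blast
      then show ?thesis by (intro exI[of _ "(c, \<Delta>')"]) (simp add: good_def)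
    qed simp
  qed
  from choice[OF this] obtain F where F: "\<forall>\<Delta>. good \<Delta> \<longrightarrow> (\<Delta> = (\<lambda>j. comb (fst (F \<Delta>)) g j + mp_const PP * snd (F \<Delta>) j) \<and> good (snd (F \<Delta>)) \<and> fst (F \<Delta>) \<in> Cset d)"
    by (elim exE)
  define D where "D N = ((snd \<circ> F) ^^ N) \<Delta>0" for N
  define C where "C N = fst (F (D N))" for N
  have D0': "D 0 = \<Delta>0" by (simp add: D_def)
  have D_Suc: "D (Suc N) = snd (F (D N))" for N by (simp add: D_def)
  have goodD: "good (D N)" for N
  proof (induction N)
    case 0 then show ?case using D0 by (simp add: D0' good_def)
  next
    case (Suc N) then show ?case using F by (simp add: D_Suc)
  qed
  have stepD: "D N = (\<lambda>j. comb (C N) g j + mp_const PP * D (Suc N) j)" for N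
    using F goodD[of N] by (simp add: C_def D_Suc)
  have CC: "C N \<in> Cset d" for N
    using F goodD[of N] by (simp add: C_def)
  have finA: "finite (Cset d \<times> (UNIV :: 'n set))" using finite_Cset by simp
  obtain K where K: "K \<ge> 0" "\<forall>x\<in>Cset d \<times> (UNIV :: 'n set). \<forall>\<mu>. \<bar>lk ((\<lambda>(c, j). comb c g j) x) \<mu>\<bar> \<le> K"
    using coeff_bound_finite[OF finA] by blast
  have Kb: "\<bar>lk (comb c g j) \<mu>\<bar> \<le> K" if "c \<in> Cset d" for c j \<mu>
    using K(2) that by auto
  obtain B0 where B0: "B0 \<ge> 0" "\<forall>j\<in>(UNIV :: 'n set). \<forall>\<mu>. \<bar>lk (\<Delta>0 j) \<mu>\<bar> \<le> B0"
    using coeff_bound_finite[of "UNIV :: 'n set" \<Delta>0] by auto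
  have bnd: "\<bar>lk (D N j) \<mu>\<bar> \<le> max (K + 1) (B0 - int N)" for N j \<mu>
  proof (induction N arbitrary: j \<mu>)
    case 0 then show ?case using B0 by (simp add: D0' le_max_iff_disj)
  next
    case (Suc N)
    define x where "x = lk (D N j) \<mu>"
    define y where "y = lk (comb (C N) g j) \<mu>"
    define z where "z = lk (D (Suc N) j) \<mu>"
    have xyz: "x = y + PP * z"
      unfolding x_def y_def z_def by (subst stepD) (simp add: lookup_add lookup_const_mult)
    have hx: "\<bar>x\<bar> \<le> max (K + 1) (B0 - int N)" unfolding x_def by (rule Suc.IH)
    have hy: "\<bar>y\<bar> \<le> K" unfolding y_def by (rule Kb[OF CC])
    have "PP * \<bar>z\<bar> = \<bar>x - y\<bar>" using xyz PP2 by (simp add: abs_mult)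
    also have "\<dots> \<le> \<bar>x\<bar> + \<bar>y\<bar>" by (rule abs_triangle_ineq4)
    finally have h1: "PP * \<bar>z\<bar> \<le> \<bar>x\<bar> + \<bar>y\<bar>" .
    have h2: "2 * \<bar>z\<bar> \<le> PP * \<bar>z\<bar>" using PP2 by (intro mult_right_mono) auto
    have "2 * \<bar>z\<bar> \<le> max (K + 1) (B0 - int N) + K" using h1 h2 hx hy by linarith
    then have "\<bar>z\<bar> \<le> max (K + 1) (B0 - int (Suc N))"
      using K(1) by (simp add: max_def split: if_splits)
    then show ?case unfolding z_def .
  qed
  define N0 where "N0 = nat B0"
  have inB: "D (N0 + t) \<in> Bset d (K + 1)" for t
  proof -
    have "\<bar>lk (D (N0 + t) j) \<mu>\<bar> \<le> K + 1" for j \<mu>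
    proof -
      have "max (K + 1) (B0 - int (N0 + t)) = K + 1" using B0(1) K(1) by (simp add: N0_def)
      then show ?thesis using bnd[of "N0 + t" j \<mu>] by simp
    qed
    moreover have "homog_deriv d (D (N0 + t))" using goodD by (simp add: good_def)
    ultimately show ?thesis by (simp add: Bset_def homog_deriv_def)
  qed
  have "\<not> inj (\<lambda>t. D (N0 + t))"
  proof
    assume inj: "inj (\<lambda>t. D (N0 + t))"
    have "range (\<lambda>t. D (N0 + t)) \<subseteq> Bset d (K + 1)" using inB by auto
    then have "finite (range (\<lambda>t. D (N0 + t)))" by (rule finite_subset) (rule finite_Bset)
    then have "finite (UNIV :: nat set)" using inj by (rule finite_imageD)
    then show False by simp
  qed
  then obtain t1 t2 where tt: "t1 \<noteq> t2" "D (N0 + t1) = D (N0 + t2)"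
    unfolding inj_def by blast
  obtain s1 s2 where ss: "s1 < s2" "D (N0 + s1) = D (N0 + s2)"
  proof (cases "t1 < t2")
    case True then show ?thesis using that tt by blast
  next
    case False then have "t2 < t1" using tt(1) by simp
    then show ?thesis using that tt by metis
  qed
  let ?X = "\<lambda>N j. (imap (D N j) :: ('n, rat) mpoly)"
  have tel: "\<exists>C'. \<forall>j. ?X N j = comb C' thQ j + mp_const (of_int (PP ^ t)) * ?X (N + t) j" for N t
  proof (induction t)
    case 0
    show ?case by (intro exI[of _ "\<lambda>k. 0"]) (simp add: comb_def mp_const_one)
  next
    case (Suc t)
    then obtain C' where C': "\<forall>j. ?X N j = comb C' thQ j + mp_const (of_int (PP ^ t)) * ?X (N + t) j" by blast
    let ?h = "mp_const (of_int (PP ^ t)) :: ('n, rat) mpoly"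
    have st: "?X (N + t) j = comb (\<lambda>k. imap (C (N + t) k)) thQ j + mp_const (of_int PP) * ?X (N + Suc t) j" for j
    proof -
      have "?X (N + t) j = imap (comb (C (N + t)) g j + mp_const PP * D (Suc (N + t)) j)"
        by (subst stepD) simp
      also have "\<dots> = comb (\<lambda>k. imap (C (N + t) k)) thQ j + mp_const (of_int PP) * ?X (N + Suc t) j"
        by (simp add: imap_comb_Q)
      finally show ?thesis .
    qed
    have "?X N j = comb (\<lambda>k. C' k + ?h * imap (C (N + t) k)) thQ j + mp_const (of_int (PP ^ Suc t)) * ?X (N + Suc t) j" for j
    proof -
      have "?X N j = comb C' thQ j + ?h * (comb (\<lambda>k. imap (C (N + t) k)) thQ j + mp_const (of_int PP) * ?X (N + Suc t) j)"
        using C' st by simp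
      also have "\<dots> = comb C' thQ j + ?h * comb (\<lambda>k. imap (C (N + t) k)) thQ j + (?h * mp_const (of_int PP)) * ?X (N + Suc t) j"
        by (simp add: algebra_simps)
      also have "\<dots> = comb (\<lambda>k. C' k + ?h * imap (C (N + t) k)) thQ j + mp_const (of_int (PP ^ Suc t)) * ?X (N + Suc t) j"
        by (simp add: comb_scale_pt comb_add_pt mp_const_mult[symmetric] mult.commute)
      finally show ?thesis .
    qed
    then show ?case by blast
  qed
  define a0 where "a0 = N0 + s1"
  define T where "T = s2 - s1"
  have T1: "T \<ge> 1" using ss(1) by (simp add: T_def)
  have DaT: "D (a0 + T) = D a0" using ss by (simp add: a0_def T_def)
  obtain C1 where C1: "\<forall>j. ?X a0 j = comb C1 thQ j + mp_const (of_int (PP ^ T)) * ?X (a0 + T) j"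
    using tel by blast
  define q :: rat where "q = 1 - of_int (PP ^ T)"
  have "PP ^ T \<ge> PP ^ 1" using PP2 T1 by (intro power_increasing) auto
  then have "PP ^ T \<noteq> 1" using PP2 by simp
  then have qnz: "q \<noteq> 0" unfolding q_def by (metis eq_iff_diff_eq_0 of_int_eq_1_iff)
  have repa: "?X a0 j = comb (\<lambda>k. mp_const (1 / q) * C1 k) thQ j" for j
  proof -
    have "?X a0 j = comb C1 thQ j + mp_const (of_int (PP ^ T)) * ?X a0 j" using C1 DaT by metis
    then have "mp_const q * ?X a0 j = comb C1 thQ j"
      unfolding q_def mp_const_diff mp_const_one by (simp add: algebra_simps)
    then have "mp_const (1 / q) * (mp_const q * ?X a0 j) = mp_const (1 / q) * comb C1 thQ j" by simp
    moreover have "mp_const (1 / q) * (mp_const q * ?X a0 j) = ?X a0 j"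
      using qnz by (simp add: mult.assoc[symmetric] mp_const_mult[symmetric] mp_const_one)
    ultimately show ?thesis by (simp add: comb_scale_pt)
  qed
  obtain C2 where C2: "\<forall>j. ?X 0 j = comb C2 thQ j + mp_const (of_int (PP ^ a0)) * ?X (0 + a0) j"
    using tel by blast
  have "?X 0 j = comb (\<lambda>k. C2 k + mp_const (of_int (PP ^ a0)) * (mp_const (1 / q) * C1 k)) thQ j" for j
    using C2 repa by (simp add: comb_scale_pt comb_add_pt)
  then show ?thesis using D0' by (intro exI) (rule ext, simp only:)
qed

end


definition Sm :: "('n::finite \<Rightarrow> ('n, int) mpoly) \<Rightarrow> nat" where
  "Sm v = (\<Sum>k\<in>UNIV. \<Sum>\<mu>\<in>ks (v k). nat \<bar>lk (v k) \<mu>\<bar>)"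

lemma Sm_pos: "v \<noteq> (\<lambda>k. 0) \<Longrightarrow> Sm v > 0"
proof -
  assume "v \<noteq> (\<lambda>k. 0)"
  then obtain k where k: "v k \<noteq> 0" by auto
  then obtain \<mu> where mu: "\<mu> \<in> ks (v k)" by (metis all_not_in_conv keys_eq_empty)
  have "0 < nat \<bar>lk (v k) \<mu>\<bar>" using mu by (simp add: in_keys_iff)
  also have "\<dots> \<le> (\<Sum>\<mu>\<in>ks (v k). nat \<bar>lk (v k) \<mu>\<bar>)" using mu by (intro member_le_sum) auto
  also have "\<dots> \<le> Sm v" unfolding Sm_def by (intro member_le_sum) auto
  finally show ?thesis .
qed

lemma Sm_scale:
  assumes "c \<noteq> 0" "\<And>k. v k = mp_const c * w k"
  shows "Sm v = nat \<bar>c\<bar> * Sm w"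
proof -
  have lk: "lk (v k) \<mu> = c * lk (w k) \<mu>" for k \<mu> using assms(2) by (simp add: lookup_const_mult)
  have ks: "ks (v k) = ks (w k)" for k using assms(1) by (auto simp: in_keys_iff lk)
  show ?thesis unfolding Sm_def
    by (simp add: ks lk abs_mult nat_mult_distrib sum_distrib_left)
qed

context core
begin

lemma repr_all:
  assumes "\<Delta> \<in> ker_phi_Z n a m"
  shows "\<exists>u. (\<lambda>j. (imap (\<Delta> j) :: ('n, rat) mpoly)) = comb u thQ"
proof -
  define Ds where "Ds = (\<Union>j. mono_deg ` ks (\<Delta> j))"
  have fin: "finite Ds" by (simp add: Ds_def)
  have "\<forall>d. \<exists>u. (\<lambda>j. (imap (hc d (\<Delta> j)) :: ('n, rat) mpoly)) = comb u thQ"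
  proof
    fix d
    have "(\<lambda>j. hc d (\<Delta> j)) \<in> ker_phi_Z n a m" by (rule KZ_hc[OF assms])
    moreover have "homog_deriv d (\<lambda>j. hc d (\<Delta> j))" by (simp add: homog_deriv_def homog_hc)
    ultimately show "\<exists>u. (\<lambda>j. (imap (hc d (\<Delta> j)) :: ('n, rat) mpoly)) = comb u thQ"
      by (rule repr_homog)
  qed
  from choice[OF this] obtain u where u: "\<forall>d. (\<lambda>j. (imap (hc d (\<Delta> j)) :: ('n, rat) mpoly)) = comb (u d) thQ"
    by (elim exE)
  have "(imap (\<Delta> j) :: ('n, rat) mpoly) = comb (\<lambda>k. \<Sum>d\<in>Ds. u d k) thQ j" for j
  proof -
    have "\<Delta> j = (\<Sum>d\<in>Ds. hc d (\<Delta> j))" by (rule hc_decomp[OF fin]) (auto simp: Ds_def)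
    then have "(imap (\<Delta> j) :: ('n, rat) mpoly) = imap (\<Sum>d\<in>Ds. hc d (\<Delta> j))"
      by (rule arg_cong)
    also have "\<dots> = (\<Sum>d\<in>Ds. imap (hc d (\<Delta> j)))"
      by (rule imap_sum)
    also have "\<dots> = (\<Sum>d\<in>Ds. comb (u d) thQ j)"
      by (intro sum.cong refl) (rule fun_cong[OF spec[OF u]])
    also have "\<dots> = comb (\<lambda>k. \<Sum>d\<in>Ds. u d k) thQ j"
      using fun_cong[OF comb_sum[OF fin, of u thQ], of j] by simp
    finally show ?thesis .
  qed
  then show ?thesis by blast
qed

lemma zero_in_Dp: "(\<lambda>j. 0) \<in> deriv_module n (\<lambda>i k. (of_int (a i k) :: 'p mod_ring)) m"
  by (simp add: deriv_module_alt ev_zero)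

lemma uniqZ: "comb v g = (\<lambda>j. 0) \<Longrightarrow> v = (\<lambda>k. 0)"
proof (induction "Sm v" arbitrary: v rule: less_induct)
  case less
  let ?\<theta> = "\<lambda>k j. (imap (g k j) :: ('n, 'p mod_ring) mpoly)"
  have e1: "(\<lambda>j. 0) = comb (\<lambda>k. imap (v k)) ?\<theta>"
  proof
    fix j
    have "(imap (comb v g j) :: ('n, 'p mod_ring) mpoly) = comb (\<lambda>k. imap (v k)) ?\<theta> j"
      by (simp add: comb_def imap_sum)
    then show "0 = comb (\<lambda>k. imap (v k)) ?\<theta> j" using less.prems by (metis imap_zero)
  qed
  have e2: "(\<lambda>j. 0) = comb (\<lambda>k. 0) ?\<theta>" by (simp add: comb_zero)
  have ex1: "\<exists>!c. (\<lambda>j. 0) = comb c ?\<theta>" by (rule bspec[OF uniq zero_in_Dp])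
  have "(\<lambda>k. imap (v k) :: ('n, 'p mod_ring) mpoly) = (\<lambda>k. 0)"
  proof -
    from ex1 obtain c0 where "(\<lambda>j. 0) = comb c0 ?\<theta>" and un: "\<And>y. (\<lambda>j. 0) = comb y ?\<theta> \<Longrightarrow> y = c0"
      by (elim ex1E) blast
    have "(\<lambda>k. imap (v k) :: ('n, 'p mod_ring) mpoly) = c0" by (rule un[OF e1])
    moreover have "(\<lambda>k. 0 :: ('n, 'p mod_ring) mpoly) = c0" by (rule un[OF e2])
    ultimately show ?thesis by simp
  qed
  then have r0: "(imap (v k) :: ('n, 'p mod_ring) mpoly) = 0" for k by metis
  define w where "w k = Poly_Mapping.map (\<lambda>x. x div int CARD('p)) (v k)" for k
  have vw: "v k = mp_const (int CARD('p)) * w k" for k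
    unfolding w_def by (rule red_zero_dvd[OF r0])
  have cw: "comb w g = (\<lambda>j. 0)"
  proof
    fix j
    have vfun: "v = (\<lambda>k. mp_const (int CARD('p)) * w k)" by (rule ext) (rule vw)
    have "mp_const (int CARD('p)) * comb w g j = comb v g j"
      by (simp add: comb_scale_pt vfun)
    also have "\<dots> = mp_const (int CARD('p)) * 0" using less.prems by simp
    finally show "comb w g j = 0" by (rule const_cancel[rotated]) simp
  qed
  show ?case
  proof (rule ccontr)
    assume vnz: "v \<noteq> (\<lambda>k. 0)"
    have Sv: "Sm v = nat \<bar>int CARD('p)\<bar> * Sm w" by (rule Sm_scale[OF _ vw]) simp
    have c2: "nat \<bar>int CARD('p)\<bar> \<ge> 2" using P_ge2 by simp
    have "2 * Sm w \<le> nat \<bar>int CARD('p)\<bar> * Sm w" using c2 by (rule mult_right_mono) simp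
    then have h2: "2 * Sm w \<le> Sm v" using Sv by simp
    have "Sm v > 0" by (rule Sm_pos[OF vnz])
    then have "Sm w < Sm v" using h2 by linarith
    then have "w = (\<lambda>k. 0)" using less.hyps cw by blast
    then have "v = (\<lambda>k. 0)" by (simp add: vw fun_eq_iff)
    then show False using vnz by simp
  qed
qed

lemma uniqQ: "comb u thQ = comb u' thQ \<Longrightarrow> u = u'"
proof -
  assume eq: "comb u thQ = comb u' thQ"
  define w where "w k = u k - u' k" for k
  have cw: "comb w thQ j = 0" for j
  proof -
    have "comb w thQ j = comb u thQ j - comb u' thQ j"
      unfolding comb_def w_def by (simp add: left_diff_distrib sum_subtractf)
    then show ?thesis using fun_cong[OF eq, of j] by simp
  qed
  obtain D :: int where D: "D > 0" "\<forall>k\<in>UNIV. \<exists>v. mp_const (of_int D) * w k = imap v"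
    using common_denom_polys[of "UNIV :: 'n set" w] by auto
  from bchoice[OF D(2)] obtain V where V: "\<forall>k\<in>UNIV. mp_const (of_int D) * w k = imap (V k)"
    by blast
  have "comb V g = (\<lambda>j. 0)"
  proof
    fix j
    have "(imap (comb V g j) :: ('n, rat) mpoly) = comb (\<lambda>k. imap (V k)) thQ j" by (rule imap_comb_Q)
    also have "\<dots> = comb (\<lambda>k. mp_const (of_int D) * w k) thQ j" using V by simp
    also have "\<dots> = mp_const (of_int D) * comb w thQ j" by (simp add: comb_scale_pt)
    also have "\<dots> = imap 0" by (simp add: cw)
    finally show "comb V g j = 0" by (rule imap_inj_rat)
  qed
  then have "V = (\<lambda>k. 0)" by (rule uniqZ)
  then have e0: "mp_const (of_int D) * w k = mp_const (of_int D) * 0" for k using V by simp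
  have "w k = 0" for k
  proof (rule const_cancel)
    show "(of_int D :: rat) \<noteq> 0" using D(1) by simp
    show "mp_const (of_int D) * w k = mp_const (of_int D) * 0" by (rule e0)
  qed
  then show "u = u'" by (simp add: w_def fun_eq_iff)
qed

lemma existsQ:
  assumes "\<delta> \<in> deriv_module n (\<lambda>i k. (of_int (a i k) :: rat)) m"
  shows "\<exists>u. \<delta> = comb u thQ"
proof -
  let ?LQ = "\<lambda>i. lin_form (\<lambda>k. (of_int (a i k) :: rat))"
  let ?evQ = "\<lambda>i. ev (\<lambda>k. (of_int (a i k) :: rat))"
  have "\<forall>i. \<exists>h. i < n \<longrightarrow> ?evQ i \<delta> = ?LQ i ^ m i * h"
    using assms unfolding deriv_module_alt by (auto elim!: dvdE)
  from choice[OF this] obtain h where h: "\<And>i. i < n \<Longrightarrow> ?evQ i \<delta> = ?LQ i ^ m i * h i"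
    by blast
  define I where "I = range (Inl :: 'n \<Rightarrow> 'n + nat) \<union> Inr ` {..<n}"
  define Fm where "Fm x = (case x of Inl j \<Rightarrow> \<delta> j | Inr i \<Rightarrow> h i)" for x :: "'n + nat"
  have finI: "finite I" unfolding I_def by (intro finite_UnI finite_imageI) auto
  obtain D :: int where D: "D > 0" "\<forall>x\<in>I. \<exists>v. mp_const (of_int D) * Fm x = imap v"
    using common_denom_polys[OF finI, of Fm] by auto
  from bchoice[OF D(2)] obtain V where V: "\<forall>x\<in>I. mp_const (of_int D) * Fm x = imap (V x)"
    by blast
  define \<Delta> where "\<Delta> j = V (Inl j)" for j
  define H where "H i = V (Inr i)" for i
  have Dd: "mp_const (of_int D) * \<delta> j = imap (\<Delta> j)" for j
    using V[rule_format, of "Inl j"] by (simp add: I_def Fm_def \<Delta>_def)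
  have Dh: "i < n \<Longrightarrow> mp_const (of_int D) * h i = imap (H i)" for i
    using V[rule_format, of "Inr i"] by (simp add: I_def Fm_def H_def)
  have DK: "\<Delta> \<in> ker_phi_Z n a m"
    unfolding mem_KZ
  proof (intro allI impI)
    fix i assume i: "i < n"
    have "(imap (ev (a i) \<Delta>) :: ('n, rat) mpoly) = ?evQ i (\<lambda>j. imap (\<Delta> j))" by (rule ev_imap)
    also have "\<dots> = ?evQ i (\<lambda>j. mp_const (of_int D) * \<delta> j)" by (simp add: Dd)
    also have "\<dots> = mp_const (of_int D) * (?LQ i ^ m i * h i)" by (simp add: ev_scale h[OF i])
    also have "\<dots> = ?LQ i ^ m i * imap (H i)" by (simp add: Dh[OF i, symmetric] algebra_simps)
    also have "\<dots> = imap (lin_form (a i) ^ m i * H i)" by (simp add: lin_form_imap)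
    finally have "ev (a i) \<Delta> = lin_form (a i) ^ m i * H i" by (rule imap_inj_rat)
    then show "lin_form (a i) ^ m i dvd ev (a i) \<Delta>" by simp
  qed
  obtain u where u: "(\<lambda>j. (imap (\<Delta> j) :: ('n, rat) mpoly)) = comb u thQ"
    using repr_all[OF DK] by blast
  have "\<delta> j = comb (\<lambda>k. mp_const (1 / of_int D) * u k) thQ j" for j
  proof -
    have "\<delta> j = mp_const (1 / of_int D) * (mp_const (of_int D) * \<delta> j)"
      using D(1) by (simp add: mult.assoc[symmetric] mp_const_mult[symmetric] mp_const_one)
    also have "\<dots> = mp_const (1 / of_int D) * comb u thQ j" using Dd fun_cong[OF u, of j] by simp
    also have "\<dots> = comb (\<lambda>k. mp_const (1 / of_int D) * u k) thQ j" by (rule comb_scale_pt)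
    finally show ?thesis .
  qed
  then show ?thesis by blast
qed

lemma freeQ: "free_with_exponents n (\<lambda>i k. (of_int (a i k) :: rat)) m e"
  unfolding free_with_exponents_def
proof (intro exI conjI allI ballI)
  fix k
  show "thQ k \<in> deriv_module n (\<lambda>i k. (of_int (a i k) :: rat)) m"
    using KZ_imap[OF gK[of k]] by (simp add: thQ_def[abs_def])
  show "homog_deriv (e k) (thQ k)"
    using gH[of k] by (simp add: homog_deriv_def thQ_def homog_imap)
next
  fix \<delta> assume "\<delta> \<in> deriv_module n (\<lambda>i k. (of_int (a i k) :: rat)) m"
  then obtain u where u: "\<delta> = comb u thQ" using existsQ by blast
  show "\<exists>!u. \<delta> = (\<lambda>j. \<Sum>k\<in>UNIV. u k * thQ k j)"
  proof
    show "\<delta> = (\<lambda>j. \<Sum>k\<in>UNIV. u k * thQ k j)" using u by (simp add: comb_def)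
  next
    fix u' assume "\<delta> = (\<lambda>j. \<Sum>k\<in>UNIV. u' k * thQ k j)"
    then have "comb u' thQ = comb u thQ" using u by (simp add: comb_def)
    then show "u' = u" by (rule uniqQ)
  qed
qed

end


lemma KZ_hc_global: "\<Delta> \<in> ker_phi_Z n a m \<Longrightarrow> (\<lambda>j. hc d (\<Delta> j)) \<in> ker_phi_Z n a m"
  unfolding ker_alt
proof (intro CollectI allI impI)
  fix i assume A0: "\<Delta> \<in> {g. \<forall>i<n. lin_form (a i) ^ m i dvd ev (a i) g}" and i: "i < n"
  then have A: "\<forall>i<n. lin_form (a i) ^ m i dvd ev (a i) \<Delta>" by simp
  obtain H where H: "ev (a i) \<Delta> = H * lin_form (a i) ^ m i" using A i by (auto elim!: dvdE simp: mult.commute)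
  have hp: "homogeneous_of_deg (m i * 1) (lin_form (a i) ^ m i)"
    by (rule homog_power) (rule homog_lin_form)
  have "ev (a i) (\<lambda>j. hc d (\<Delta> j)) = hc d (ev (a i) \<Delta>)"
    unfolding ev_def hc_sum
    by (intro sum.cong refl) (simp add: mult.commute[of "mp_const _"] hc_mult_homog[OF homog_const])
  also have "\<dots> = (if m i * 1 \<le> d then hc (d - m i * 1) H * lin_form (a i) ^ m i else 0)"
    unfolding H by (rule hc_mult_homog[OF hp])
  finally show "lin_form (a i) ^ m i dvd ev (a i) (\<lambda>j. hc d (\<Delta> j))" by simp
qed

theorem theorem4p2:
  fixes n :: nat
    and a :: "nat \<Rightarrow> 'n::finite \<Rightarrow> int"
    and m :: "nat \<Rightarrow> nat"
    and e :: "'n \<Rightarrow> nat"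
  assumes distinct_hyps: "\<forall>i<n. \<forall>j<n. i \<noteq> j \<longrightarrow>
             {x :: 'n \<Rightarrow> rat. (\<Sum>k\<in>UNIV. of_int (a i k) * x k) = 0}
           \<noteq> {x :: 'n \<Rightarrow> rat. (\<Sum>k\<in>UNIV. of_int (a j k) * x k) = 0}"
    and primitive: "\<forall>i<n. \<forall>q::int. prime q \<longrightarrow> \<not> (\<forall>k. q dvd a i k)"
    and good: "good_prime TYPE('p::prime_card) n a"
    and surj: "\<forall>\<delta>\<in>deriv_module n (\<lambda>i k. (of_int (a i k) :: 'p mod_ring)) m.
                 \<exists>g\<in>ker_phi_Z n a m. red_p_vec g = \<delta>"
    and free_p: "free_with_exponents n (\<lambda>i k. (of_int (a i k) :: 'p mod_ring)) m e"
  shows "free_with_exponents n (\<lambda>i k. (of_int (a i k) :: rat)) m e"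
proof -
  obtain \<theta>p :: "'n \<Rightarrow> 'n \<Rightarrow> ('n, 'p mod_ring) mpoly" where
    th1: "\<forall>k. \<theta>p k \<in> deriv_module n (\<lambda>i k. (of_int (a i k) :: 'p mod_ring)) m \<and> homog_deriv (e k) (\<theta>p k)" and
    th2: "\<forall>\<delta>\<in>deriv_module n (\<lambda>i k. (of_int (a i k) :: 'p mod_ring)) m. \<exists>!c. \<delta> = (\<lambda>j. \<Sum>k\<in>UNIV. c k * \<theta>p k j)"
    using free_p unfolding free_with_exponents_def by blast
  have "\<forall>k. \<exists>G. G \<in> ker_phi_Z n a m \<and> red_p_vec G = \<theta>p k"
    using surj th1 by blast
  from choice[OF this] obtain G where G: "\<And>k. G k \<in> ker_phi_Z n a m" "\<And>k. red_p_vec (G k) = \<theta>p k"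
    by blast
  define g where "g k = (\<lambda>j. hc (e k) (G k j))" for k
  have gK: "g k \<in> ker_phi_Z n a m" for k unfolding g_def by (rule KZ_hc_global[OF G(1)])
  have gH: "homog_deriv (e k) (g k)" for k by (simp add: g_def homog_deriv_def homog_hc)
  have gth: "(\<lambda>k j. (imap (g k j) :: ('n, 'p mod_ring) mpoly)) = \<theta>p"
  proof (intro ext)
    fix k j
    have "(imap (G k j) :: ('n, 'p mod_ring) mpoly) = \<theta>p k j"
      using fun_cong[OF G(2)[of k], of j] by (simp add: red_p_vec_def red_p_imap)
    moreover have "homogeneous_of_deg (e k) (\<theta>p k j)" using th1 by (simp add: homog_deriv_def)
    ultimately show "(imap (g k j) :: ('n, 'p mod_ring) mpoly) = \<theta>p k j"
      by (simp add: g_def imap_hc hc_homog)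
  qed
  have nz: "\<exists>j. (of_int (a i j) :: 'p mod_ring) \<noteq> 0" if i: "i < n" for i
  proof -
    have "\<not> (\<forall>k. int CARD('p) dvd a i k)" using primitive i prime_card_int[where 'a='p] by blast
    then show ?thesis by (auto simp: of_int_modring_0)
  qed
  have cr: "core TYPE('p) a n m e g"
  proof
    show "\<And>k. g k \<in> ker_phi_Z n a m" by (rule gK)
    show "\<And>k. homog_deriv (e k) (g k)" by (rule gH)
    show "\<forall>\<delta>\<in>deriv_module n (\<lambda>i k. (of_int (a i k) :: 'p mod_ring)) m. \<exists>!c. \<delta> = comb c (\<lambda>k j. imap (g k j))"
      using th2 unfolding gth comb_def .
    show "\<And>i. i < n \<Longrightarrow> \<exists>j. (of_int (a i j) :: 'p mod_ring) \<noteq> 0" by (rule nz)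
  qed
  show ?thesis by (rule core.freeQ[OF cr])
qed


end
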